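(* Let $p$ be a positive integer. Then $\mathrm{spec}_{\mathrm{imp}}(p)=\{0,1,2,\dots,p-1\}$. That is, for every integer $n$ with $0\le n\le p-1$ there exists a critical exactly $p$-improper interval graph $G$ and a vertex $v$ of $G$ such that $G-v$ is exactly $n$-improper, and every integer $n$ arising in this way (from some critical exactly $p$-improper interval graph by removing a single vertex) lies in $\{0,1,\dots,p-1\}$.
   Context: An interval graph is a graph admitting an interval representation: an assignment of a closed real interval to each vertex so that two distinct vertices are adjacent if and only if their intervals intersect. For an integer $p\ge 0$, a graph is $p$-improper (a $p$-improper interval graph) if it has an interval representation in which no interval contains more than $p$ other intervals. Every $(p-1)$-improper interval graph is also $p$-improper. A graph is exactly $p$-improper if it is $p$-improper but not $(p-1)$-improper (for $p=0$: it is $0$-improper); in particular every interval graph is exactly $n$-improper for a unique $n\ge 0$, its impropriety. A critical $p$-improper interval graph is a $p$-improper interval graph $G$ such that $G-v$ is $(p-1)$-improper for every vertex $v$ of $G$. The spectrum of impropriety $\mathrm{spec}_{\mathrm{imp}}(p)$ is the set of all integers $n$ such that some critical exactly $p$-improper interval graph $G$ has a vertex $v$ with $G-v$ exactly $n$-improper. *)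

theory Defs
  imports Main Complex_Main
begin

definition simple_graph :: "'a set \<Rightarrow> ('a \<Rightarrow> 'a \<Rightarrow> bool) \<Rightarrow> bool" where
  "simple_graph V E \<longleftrightarrow> finite V \<and> (\<forall>u v. E u v \<longrightarrow> u \<in> V \<and> v \<in> V)
     \<and> (\<forall>u v. E u v \<longrightarrow> E v u) \<and> (\<forall>v. \<not> E v v)"

definition interval_rep :: "'a set \<Rightarrow> ('a \<Rightarrow> 'a \<Rightarrow> bool) \<Rightarrow> ('a \<Rightarrow> real) \<Rightarrow> ('a \<Rightarrow> real) \<Rightarrow> bool" where
  "interval_rep V E l r \<longleftrightarrow> (\<forall>v\<in>V. l v \<le> r v) \<and>
     (\<forall>u\<in>V. \<forall>v\<in>V. u \<noteq> v \<longrightarrow> (E u v \<longleftrightarrow> {l u..r u} \<inter> {l v..r v} \<noteq> {}))"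

definition interval_graph :: "'a set \<Rightarrow> ('a \<Rightarrow> 'a \<Rightarrow> bool) \<Rightarrow> bool" where
  "interval_graph V E \<longleftrightarrow> simple_graph V E \<and> (\<exists>l r. interval_rep V E l r)"

definition improper :: "nat \<Rightarrow> 'a set \<Rightarrow> ('a \<Rightarrow> 'a \<Rightarrow> bool) \<Rightarrow> bool" where
  "improper p V E \<longleftrightarrow> simple_graph V E \<and> (\<exists>l r. interval_rep V E l r \<and>
     (\<forall>v\<in>V. card {u\<in>V. u \<noteq> v \<and> {l u..r u} \<subseteq> {l v..r v}} \<le> p))"

definition exactly_improper :: "nat \<Rightarrow> 'a set \<Rightarrow> ('a \<Rightarrow> 'a \<Rightarrow> bool) \<Rightarrow> bool" where
  "exactly_improper p V E \<longleftrightarrow> improper p V E \<and> (p = 0 \<or> \<not> improper (p - 1) V E)"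

definition del_vertex :: "'a set \<Rightarrow> ('a \<Rightarrow> 'a \<Rightarrow> bool) \<Rightarrow> 'a \<Rightarrow> 'a set \<times> ('a \<Rightarrow> 'a \<Rightarrow> bool)" where
  "del_vertex V E v = (V - {v}, \<lambda>x y. E x y \<and> x \<noteq> v \<and> y \<noteq> v)"

text \<open>Critical p-improper (only meaningful for p \<ge> 1, where (p-1) is a natural number).\<close>
definition critical_improper :: "nat \<Rightarrow> 'a set \<Rightarrow> ('a \<Rightarrow> 'a \<Rightarrow> bool) \<Rightarrow> bool" where
  "critical_improper p V E \<longleftrightarrow> p \<ge> 1 \<and> improper p V E \<and>
     (\<forall>v\<in>V. improper (p - 1) (fst (del_vertex V E v)) (snd (del_vertex V E v)))"

text \<open>Spectrum of impropriety; graphs are taken with vertices in nat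
  (every finite graph is isomorphic to one of these).\<close>
definition spec_imp :: "nat \<Rightarrow> nat set" where
  "spec_imp p = {n. \<exists>(V::nat set) E v. critical_improper p V E \<and> exactly_improper p V E \<and>
     v \<in> V \<and> exactly_improper n (fst (del_vertex V E v)) (snd (del_vertex V E v))}"

end

theory Submission
  imports Defs
begin

definition cnt :: "'a set \<Rightarrow> ('a \<Rightarrow> real) \<Rightarrow> ('a \<Rightarrow> real) \<Rightarrow> 'a \<Rightarrow> nat" where
  "cnt V l r v = card {u\<in>V. u \<noteq> v \<and> {l u..r u} \<subseteq> {l v..r v}}"

lemma improper_alt: "improper p V E \<longleftrightarrow> simple_graph V E \<and> (\<exists>l r. interval_rep V E l r \<and> (\<forall>v\<in>V. cnt V l r v \<le> p))"
  unfolding improper_def cnt_def by simp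

lemma improper_mono: "improper p V E \<Longrightarrow> p \<le> q \<Longrightarrow> improper q V E"
  unfolding improper_alt by (meson order_trans)

lemma meet_iff: "(a::real) \<le> b \<Longrightarrow> c \<le> d \<Longrightarrow> ({a..b} \<inter> {c..d} \<noteq> {}) \<longleftrightarrow> (a \<le> d \<and> c \<le> b)"
  apply (auto simp: set_eq_iff)
  by (metis max.cobounded2 max.commute max_def)

lemma del_simple: "simple_graph V E \<Longrightarrow> simple_graph (fst (del_vertex V E w)) (snd (del_vertex V E w))"
  unfolding simple_graph_def del_vertex_def by auto

lemma del_rep: "interval_rep V E l r \<Longrightarrow> interval_rep (fst (del_vertex V E w)) (snd (del_vertex V E w)) l r"
  unfolding interval_rep_def del_vertex_def by auto

lemma cnt_del: "cnt (fst (del_vertex V E w)) l r v = card ({u\<in>V. u \<noteq> v \<and> {l u..r u} \<subseteq> {l v..r v}} - {w})"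
  unfolding cnt_def del_vertex_def by (auto intro!: arg_cong[where f=card])

lemma hub_count:
  assumes rep: "interval_rep V E l r" and fin: "finite V" and v: "v \<in> V"
    and A: "A \<subseteq> V - {v}" and adj: "\<forall>u\<in>A. E v u"
  shows "card A \<le> cnt V l r v + card ({u\<in>A. l u < l v} \<union> {u\<in>A. r v < r u})"
proof -
  let ?S = "{u\<in>V. u \<noteq> v \<and> {l u..r u} \<subseteq> {l v..r v}}"
  let ?Q = "{u\<in>A. l u < l v} \<union> {u\<in>A. r v < r u}"
  have "A \<subseteq> ?S \<union> ?Q"
  proof
    fix u assume u: "u \<in> A"
    have "l u \<le> r u" using rep u A unfolding interval_rep_def by auto
    then show "u \<in> ?S \<union> ?Q" using u A by auto
  qed
  have fA: "finite A" using fin A finite_subset by blast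
  then have "card A \<le> card (?S \<union> ?Q)" using \<open>A \<subseteq> ?S \<union> ?Q\<close> fin by (intro card_mono) auto
  also have "\<dots> \<le> card ?S + card ?Q" by (rule card_Un_le)
  finally show ?thesis unfolding cnt_def .
qed

lemma rep_iff:
  assumes "interval_rep V E l r" "u \<in> V" "w \<in> V" "u \<noteq> w"
  shows "E u w \<longleftrightarrow> (l u \<le> r w \<and> l w \<le> r u)"
  using assms unfolding interval_rep_def by auto

lemma rep_le: "interval_rep V E l r \<Longrightarrow> u \<in> V \<Longrightarrow> l u \<le> r u"
  unfolding interval_rep_def by auto

lemma hub_clique_a:
  assumes rep: "interval_rep V E l r" and v: "v \<in> V"
    and A: "A \<subseteq> V - {v}" and adj: "\<forall>u\<in>A. E v u"
    and u: "u \<in> A" "l u < l v" and w: "w \<in> A" "l w < l v" and uw: "u \<noteq> w"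
  shows "E u w"
proof -
  have "u \<in> V" "w \<in> V" "u \<noteq> v" "w \<noteq> v" using u w A by auto
  then have "l v \<le> r u" "l v \<le> r w" using rep_iff[OF rep v] adj u w by auto
  then show ?thesis using rep_iff[OF rep \<open>u \<in> V\<close> \<open>w \<in> V\<close> uw] u w by auto
qed

lemma hub_clique_b:
  assumes rep: "interval_rep V E l r" and v: "v \<in> V"
    and A: "A \<subseteq> V - {v}" and adj: "\<forall>u\<in>A. E v u"
    and u: "u \<in> A" "r v < r u" and w: "w \<in> A" "r v < r w" and uw: "u \<noteq> w"
  shows "E u w"
proof -
  have "u \<in> V" "w \<in> V" "u \<noteq> v" "w \<noteq> v" using u w A by auto
  then have "l u \<le> r v" "l w \<le> r v" using rep_iff[OF rep v] adj u w by auto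
  then show ?thesis using rep_iff[OF rep \<open>u \<in> V\<close> \<open>w \<in> V\<close> uw] u w by auto
qed

lemma card_le1: "finite S \<Longrightarrow> (\<And>x y. x \<in> S \<Longrightarrow> y \<in> S \<Longrightarrow> x = y) \<Longrightarrow> card S \<le> 1"
  using card_le_Suc0_iff_eq by (metis One_nat_def)

lemma star_lb:
  assumes rep: "interval_rep V E l r" and fin: "finite V" and v: "v \<in> V"
    and A: "A \<subseteq> V - {v}" and adj: "\<forall>u\<in>A. E v u"
    and ind: "\<forall>u\<in>A. \<forall>w\<in>A. \<not> E u w"
  shows "card A \<le> cnt V l r v + 2"
proof -
  have fA: "finite A" using fin A finite_subset by blast
  have 1: "card {u\<in>A. l u < l v} \<le> 1"
    using hub_clique_a[OF rep v A adj] ind fA by (intro card_le1) auto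
  have 2: "card {u\<in>A. r v < r u} \<le> 1"
    using hub_clique_b[OF rep v A adj] ind fA by (intro card_le1) auto
  have "card ({u\<in>A. l u < l v} \<union> {u\<in>A. r v < r u}) \<le> 2"
    using card_Un_le[of "{u\<in>A. l u < l v}" "{u\<in>A. r v < r u}"] 1 2 by linarith
  then show ?thesis using hub_count[OF rep fin v A adj] by linarith
qed

lemma clique_le2:
  assumes fin: "finite Q" and cl: "\<And>u w. u \<in> Q \<Longrightarrow> w \<in> Q \<Longrightarrow> u \<noteq> w \<Longrightarrow> E u w"
    and tri: "\<And>u v w. u \<in> Q \<Longrightarrow> v \<in> Q \<Longrightarrow> w \<in> Q \<Longrightarrow> u \<noteq> v \<Longrightarrow> v \<noteq> w \<Longrightarrow> u \<noteq> w \<Longrightarrow>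
          E u v \<Longrightarrow> E v w \<Longrightarrow> E u w \<Longrightarrow> False"
  shows "card Q \<le> 2"
proof (rule ccontr)
  assume "\<not> card Q \<le> 2"
  then have "3 \<le> card Q" by simp
  then obtain T where T: "T \<subseteq> Q" "card T = 3" by (meson obtain_subset_with_card_n)
  then obtain x y z where "T = {x,y,z}" "x \<noteq> y" "y \<noteq> z" "x \<noteq> z" by (auto simp: card_3_iff)
  then show False using tri[of x y z] cl T by auto
qed

lemma hub2_lb:
  assumes rep: "interval_rep V E l r" and fin: "finite V" and c: "c \<in> V"
    and adj: "\<forall>u\<in>V-{c}. E c u"
    and z: "z \<in> V" "z \<noteq> c" and ziso: "\<forall>u\<in>V. u \<noteq> c \<longrightarrow> \<not> E u z"
    and tri: "\<And>u v w. u \<in> V-{c} \<Longrightarrow> v \<in> V-{c} \<Longrightarrow> w \<in> V-{c} \<Longrightarrow> u \<noteq> v \<Longrightarrow> v \<noteq> w \<Longrightarrow> u \<noteq> w \<Longrightarrow>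
          E u v \<Longrightarrow> E v w \<Longrightarrow> E u w \<Longrightarrow> False"
    and k22: "\<And>u1 u2 w1 w2. u1 \<in> V-{c} \<Longrightarrow> u2 \<in> V-{c} \<Longrightarrow> w1 \<in> V-{c} \<Longrightarrow> w2 \<in> V-{c} \<Longrightarrow>
          distinct [u1,u2,w1,w2] \<Longrightarrow> E u1 u2 \<Longrightarrow> E w1 w2 \<Longrightarrow> E u1 w1 \<or> E u1 w2 \<or> E u2 w1 \<or> E u2 w2"
  shows "card V \<le> cnt V l r c + 4"
proof -
  let ?A = "V - {c}"
  let ?Qa = "{u\<in>?A. l u < l c}" and ?Qb = "{u\<in>?A. r c < r u}"
  have A: "?A \<subseteq> V - {c}" by simp
  have fA: "finite ?A" using fin by simp
  have cA: "card ?A + 1 = card V" using fin c by (simp add: card_Suc_Diff1 del: card_Diff_insert)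
  have ca: "card ?Qa \<le> 2"
  proof (rule clique_le2[where E=E])
    show "finite ?Qa" using fA by simp
    show "E u w" if "u \<in> ?Qa" "w \<in> ?Qa" "u \<noteq> w" for u w using hub_clique_a[OF rep c A adj] that by auto
    show False if "u \<in> ?Qa" "v \<in> ?Qa" "w \<in> ?Qa" "u \<noteq> v" "v \<noteq> w" "u \<noteq> w" "E u v" "E v w" "E u w" for u v w
      using tri[of u v w] that by auto
  qed
  have cb: "card ?Qb \<le> 2"
  proof (rule clique_le2[where E=E])
    show "finite ?Qb" using fA by simp
    show "E u w" if "u \<in> ?Qb" "w \<in> ?Qb" "u \<noteq> w" for u w using hub_clique_b[OF rep c A adj] that by auto
    show False if "u \<in> ?Qb" "v \<in> ?Qb" "w \<in> ?Qb" "u \<noteq> v" "v \<noteq> w" "u \<noteq> w" "E u v" "E v w" "E u w" for u v w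
      using tri[of u v w] that by auto
  qed
  have main: "card (?Qa \<union> ?Qb) \<le> 3"
  proof (cases "card ?Qa \<le> 1 \<or> card ?Qb \<le> 1")
    case True
    then show ?thesis using card_Un_le[of ?Qa ?Qb] ca cb by linarith
  next
    case False
    then have "card ?Qa = 2" "card ?Qb = 2" using ca cb by auto
    then obtain u1 u2 w1 w2 where qa: "?Qa = {u1,u2}" "u1 \<noteq> u2" and qb: "?Qb = {w1,w2}" "w1 \<noteq> w2"
      by (auto simp: card_2_iff)
    have "u1 \<in> ?Qa" "u2 \<in> ?Qa" "w1 \<in> ?Qb" "w2 \<in> ?Qb" by (simp_all only: qa qb insertI1 insertI2 singletonI)
    then have m: "u1 \<in> V" "u1 \<noteq> c" "l u1 < l c" "u2 \<in> V" "u2 \<noteq> c" "l u2 < l c"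
        "w1 \<in> V" "w1 \<noteq> c" "r c < r w1" "w2 \<in> V" "w2 \<noteq> c" "r c < r w2" by simp_all
    have qa_el: "x = u1 \<or> x = u2" if "x \<in> ?Qa" for x using that by (simp only: qa) blast
    have qb_el: "x = w1 \<or> x = w2" if "x \<in> ?Qb" for x using that by (simp only: qb) blast
    have E12: "E u1 u2" "E u2 u1" using hub_clique_a[OF rep c A adj] m qa(2) by auto
    have Ew12: "E w1 w2" "E w2 w1" using hub_clique_b[OF rep c A adj] m qb(2) by auto
    have zA: "z \<in> ?A" using z by auto
    have lez: "l z \<le> r z" using rep_le[OF rep z(1)] .
    have zna: "z \<notin> ?Qa"
    proof
      assume "z \<in> ?Qa"
      then have "z = u1 \<or> z = u2" by (rule qa_el)
      then show False using E12 ziso m by auto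
    qed
    have znb: "z \<notin> ?Qb"
    proof
      assume "z \<in> ?Qb"
      then have "z = w1 \<or> z = w2" by (rule qb_el)
      then show False using Ew12 ziso m by auto
    qed
    have zin: "l c \<le> l z" "r z \<le> r c" using zna znb zA by auto
    have left: "r u < l z" if "u \<in> V" "u \<noteq> c" "l u < l c" for u
    proof -
      have "u \<noteq> z" using zin that by auto
      then have "\<not> (l u \<le> r z \<and> l z \<le> r u)" using rep_iff[OF rep that(1) z(1)] ziso that by auto
      then show ?thesis using that zin lez by auto
    qed
    have right: "r z < l w" if "w \<in> V" "w \<noteq> c" "r c < r w" for w
    proof -
      have "w \<noteq> z" using zin that by auto
      then have "\<not> (l w \<le> r z \<and> l z \<le> r w)" using rep_iff[OF rep that(1) z(1)] ziso that by auto
      then show ?thesis using that zin lez by auto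
    qed
    have sep: "u \<noteq> w \<and> \<not> E u w" if "u \<in> V" "u \<noteq> c" "l u < l c" "w \<in> V" "w \<noteq> c" "r c < r w" for u w
    proof -
      have "r u < l w" using left[OF that(1-3)] right[OF that(4-6)] lez by linarith
      moreover have "l w \<le> r w" using rep_le[OF rep \<open>w \<in> V\<close>] .
      moreover have "l u \<le> r u" using rep_le[OF rep \<open>u \<in> V\<close>] .
      ultimately have "u \<noteq> w" by auto
      moreover have "\<not> E u w" using rep_iff[OF rep \<open>u \<in> V\<close> \<open>w \<in> V\<close> \<open>u \<noteq> w\<close>] \<open>r u < l w\<close> by linarith
      ultimately show ?thesis by blast
    qed
    have s11: "u1 \<noteq> w1 \<and> \<not> E u1 w1" by (rule sep) (use m in simp_all)
    have s12: "u1 \<noteq> w2 \<and> \<not> E u1 w2" by (rule sep) (use m in simp_all)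
    have s21: "u2 \<noteq> w1 \<and> \<not> E u2 w1" by (rule sep) (use m in simp_all)
    have s22: "u2 \<noteq> w2 \<and> \<not> E u2 w2" by (rule sep) (use m in simp_all)
    have "distinct [u1,u2,w1,w2]" using s11 s12 s21 s22 qa(2) qb(2) by simp
    moreover have "u1 \<in> V-{c}" "u2 \<in> V-{c}" "w1 \<in> V-{c}" "w2 \<in> V-{c}" using m by auto
    ultimately have "E u1 w1 \<or> E u1 w2 \<or> E u2 w1 \<or> E u2 w2" using k22 E12 Ew12 by blast
    then show ?thesis using s11 s12 s21 s22 by blast
  qed
  have "card ?A \<le> cnt V l r c + card (?Qa \<union> ?Qb)" using hub_count[OF rep fin c A] adj by blast
  then show ?thesis using main cA by linarith
qed

definition GV :: "nat \<Rightarrow> nat \<Rightarrow> nat set" where "GV n k = {..<n+k+5}"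
definition GE :: "nat \<Rightarrow> nat \<Rightarrow> nat \<Rightarrow> nat \<Rightarrow> bool" where
  "GE n k u v \<longleftrightarrow> u < n+k+5 \<and> v < n+k+5 \<and> u \<noteq> v \<and>
     (u = 0 \<or> v = 0 \<or> (u = 1 \<and> 3 \<le> v \<and> v \<le> n+4) \<or> (v = 1 \<and> 3 \<le> u \<and> u \<le> n+4)
      \<or> (u = 2 \<and> v = 3) \<or> (u = 3 \<and> v = 2))"

definition LS :: "nat \<Rightarrow> nat \<Rightarrow> nat \<Rightarrow> nat" where
  "LS n k u = (if u = 0 then 4 else if u = 1 then 6 else if u = 2 then 0 else if u = 3 then 2
     else if u = n+k+4 then 8*n+8*k+36 else 8*u+4)"
definition RS :: "nat \<Rightarrow> nat \<Rightarrow> nat \<Rightarrow> nat \<Rightarrow> nat \<Rightarrow> nat" where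
  "RS n k CR DR u = (if u = 0 then CR else if u = 1 then DR else if u = 2 then 4 else if u = 3 then 6
     else if u = n+k+4 then 8*n+8*k+44 else 8*u+6)"

lemma repS_adj:
  assumes "1 \<le> k" "8*n+36 \<le> DR" "DR \<le> 8*n+43" "8*n+8*k+28 \<le> CR"
    "u < n+k+5" "v < n+k+5" "u \<noteq> v" "\<not> (u = 0 \<and> v = n+k+4)" "\<not> (v = 0 \<and> u = n+k+4)"
  shows "GE n k u v \<longleftrightarrow> (LS n k u \<le> RS n k CR DR v \<and> LS n k v \<le> RS n k CR DR u)"
  using assms unfolding GE_def LS_def RS_def by (auto split: if_splits)

definition LBr :: "nat \<Rightarrow> nat \<Rightarrow> nat \<Rightarrow> nat" where
  "LBr n k u = (if u = 0 then 4 else if u = 1 then 2 else if u = 2 then 8*n+41 else if u = 3 then 8*n+40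
     else if u = 4 then 0 else if u = n+k+4 then 8*n+8*k+36 else 8*u+4)"
definition RBr :: "nat \<Rightarrow> nat \<Rightarrow> nat \<Rightarrow> nat" where
  "RBr n k u = (if u = 0 then 8*n+8*k+40 else if u = 1 then 8*n+40 else if u = 2 then 8*n+42 else if u = 3 then 8*n+41
     else if u = 4 then 4 else if u = n+k+4 then 8*n+8*k+44 else 8*u+6)"

lemma repB_adj:
  assumes "1 \<le> k" "u < n+k+5" "v < n+k+5" "u \<noteq> v"
  shows "GE n k u v \<longleftrightarrow> (LBr n k u \<le> RBr n k v \<and> LBr n k v \<le> RBr n k u)"
proof -
  have cls: "x = 0 \<or> x = 1 \<or> x = 2 \<or> x = 3 \<or> x = 4 \<or> x = n+k+4 \<or> (5 \<le> x \<and> x \<le> n+k+3)" if "x < n+k+5" for x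
    using that by linarith
  show ?thesis
    using cls[OF assms(2)] cls[OF assms(3)] assms(1,4) unfolding GE_def LBr_def RBr_def
    by (elim disjE) (simp_all; presburger)+
qed

lemma rep_nat:
  fixes L R :: "'a \<Rightarrow> nat"
  assumes "\<forall>u\<in>W. L u \<le> R u" "\<forall>u\<in>W. \<forall>v\<in>W. u \<noteq> v \<longrightarrow> (E u v \<longleftrightarrow> L u \<le> R v \<and> L v \<le> R u)"
  shows "interval_rep W E (\<lambda>u. real (L u)) (\<lambda>u. real (R u))"
  using assms unfolding interval_rep_def by auto

lemma cnt_nat:
  fixes L R :: "'a \<Rightarrow> nat"
  assumes "\<forall>u\<in>W. L u \<le> R u"
  shows "cnt W (\<lambda>u. real (L u)) (\<lambda>u. real (R u)) v = card {u\<in>W. u \<noteq> v \<and> L v \<le> L u \<and> R u \<le> R v}"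
  unfolding cnt_def using assms by (intro arg_cong[where f=card]) auto

lemma improper_nat:
  fixes L R :: "'a \<Rightarrow> nat"
  assumes "simple_graph W E" "\<forall>u\<in>W. L u \<le> R u"
    "\<forall>u\<in>W. \<forall>v\<in>W. u \<noteq> v \<longrightarrow> (E u v \<longleftrightarrow> L u \<le> R v \<and> L v \<le> R u)"
    "\<forall>v\<in>W. card {u\<in>W. u \<noteq> v \<and> L v \<le> L u \<and> R u \<le> R v} \<le> q"
  shows "improper q W E"
  unfolding improper_alt using assms rep_nat[OF assms(2,3)] cnt_nat[OF assms(2)] by metis

lemma improper_del_nat:
  fixes L R :: "'a \<Rightarrow> nat"
  assumes "simple_graph V E" "\<forall>u\<in>V-{w}. L u \<le> R u"
    "\<forall>u\<in>V-{w}. \<forall>v\<in>V-{w}. u \<noteq> v \<longrightarrow> (E u v \<longleftrightarrow> L u \<le> R v \<and> L v \<le> R u)"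
    "\<forall>v\<in>V-{w}. card {u\<in>V-{w}. u \<noteq> v \<and> L v \<le> L u \<and> R u \<le> R v} \<le> q"
  shows "improper q (fst (del_vertex V E w)) (snd (del_vertex V E w))"
proof -
  have "fst (del_vertex V E w) = V - {w}" unfolding del_vertex_def by simp
  moreover have "\<forall>u\<in>V-{w}. \<forall>v\<in>V-{w}. snd (del_vertex V E w) u v = E u v" unfolding del_vertex_def by simp
  ultimately show ?thesis using improper_nat[of "V-{w}" "snd (del_vertex V E w)" L R q] assms del_simple[OF assms(1), of w]
    by auto
qed

lemma simple_G: "simple_graph (GV n k) (GE n k)"
  unfolding simple_graph_def GV_def GE_def by auto

lemma cls: "(x::nat) < n+k+5 \<Longrightarrow> x = 0 \<or> x = 1 \<or> x = 2 \<or> x = 3 \<or> x = 4 \<or> x = n+k+4 \<or> (5 \<le> x \<and> x \<le> n+k+3)"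
  by linarith

lemma LS_RS: "8*n+36 \<le> DR \<Longrightarrow> 8*n+8*k+28 \<le> CR \<Longrightarrow> LS n k u \<le> RS n k CR DR u"
  unfolding LS_def RS_def by auto

lemma LB_RB: "LBr n k u \<le> RBr n k u"
  unfolding LBr_def RBr_def by auto

lemma cS0:
  assumes "1 \<le> k" "8*n+8*k+28 \<le> CR" "CR < 8*n+8*k+44" "\<And>u. u \<le> n+k+3 \<Longrightarrow> 8*u+6 \<le> CR \<Longrightarrow> u \<le> M"
  shows "{u\<in>GV n k. u \<noteq> 0 \<and> LS n k 0 \<le> LS n k u \<and> RS n k CR DR u \<le> RS n k CR DR 0} \<subseteq> insert 1 {4..M}"
proof
  fix u assume u: "u \<in> {u\<in>GV n k. u \<noteq> 0 \<and> LS n k 0 \<le> LS n k u \<and> RS n k CR DR u \<le> RS n k CR DR 0}"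
  then have "u < n+k+5" unfolding GV_def by auto
  then show "u \<in> insert 1 {4..M}" using cls[of u n k] u assms unfolding LS_def RS_def by auto
qed

lemma cS1:
  assumes "1 \<le> k" "8*n+36 \<le> DR" "DR \<le> 8*n+43" "\<And>u. u \<le> n+k+3 \<Longrightarrow> 8*u+6 \<le> DR \<Longrightarrow> u \<le> M"
  shows "{u\<in>GV n k. u \<noteq> 1 \<and> LS n k 1 \<le> LS n k u \<and> RS n k CR DR u \<le> RS n k CR DR 1} \<subseteq> {4..M}"
proof
  fix u assume u: "u \<in> {u\<in>GV n k. u \<noteq> 1 \<and> LS n k 1 \<le> LS n k u \<and> RS n k CR DR u \<le> RS n k CR DR 1}"
  then have "u < n+k+5" unfolding GV_def by auto
  then show "u \<in> {4..M}" using cls[of u n k] u assms unfolding LS_def RS_def by auto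
qed

lemma cSo:
  assumes "1 \<le> k" "8*n+36 \<le> DR" "8*n+8*k+28 \<le> CR" "v \<in> GV n k" "v \<noteq> 0" "v \<noteq> 1"
  shows "{u\<in>GV n k. u \<noteq> v \<and> LS n k v \<le> LS n k u \<and> RS n k CR DR u \<le> RS n k CR DR v} = {}"
proof -
  have "False" if u: "u \<in> GV n k" "u \<noteq> v" "LS n k v \<le> LS n k u" "RS n k CR DR u \<le> RS n k CR DR v" for u
  proof -
    have uv: "u < n+k+5" "v < n+k+5" using u assms unfolding GV_def by auto
    show False using cls[OF uv(1)] cls[OF uv(2)] u assms unfolding LS_def RS_def
      by (elim disjE) (simp_all; presburger)+
  qed
  then show ?thesis by blast
qed

lemma cB0: assumes "1 \<le> k" shows "{u\<in>GV n k. u \<noteq> 0 \<and> LBr n k 0 \<le> LBr n k u \<and> RBr n k u \<le> RBr n k 0} \<subseteq> {2,3} \<union> {5..n+k+3}"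
proof
  fix u assume u: "u \<in> {u\<in>GV n k. u \<noteq> 0 \<and> LBr n k 0 \<le> LBr n k u \<and> RBr n k u \<le> RBr n k 0}"
  then have "u < n+k+5" unfolding GV_def by auto
  then show "u \<in> {2,3} \<union> {5..n+k+3}" using cls[of u n k] u assms unfolding LBr_def RBr_def by auto
qed

lemma cB1: assumes "1 \<le> k" shows "{u\<in>GV n k. u \<noteq> 1 \<and> LBr n k 1 \<le> LBr n k u \<and> RBr n k u \<le> RBr n k 1} \<subseteq> {5..n+4}"
proof
  fix u assume u: "u \<in> {u\<in>GV n k. u \<noteq> 1 \<and> LBr n k 1 \<le> LBr n k u \<and> RBr n k u \<le> RBr n k 1}"
  then have "u < n+k+5" unfolding GV_def by auto
  then show "u \<in> {5..n+4}" using cls[of u n k] u assms unfolding LBr_def RBr_def by auto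
qed

lemma cBo:
  assumes "1 \<le> k" "v \<in> GV n k" "v \<noteq> 0" "v \<noteq> 1"
  shows "{u\<in>GV n k. u \<noteq> v \<and> LBr n k v \<le> LBr n k u \<and> RBr n k u \<le> RBr n k v} = {}"
proof -
  have "False" if u: "u \<in> GV n k" "u \<noteq> v" "LBr n k v \<le> LBr n k u" "RBr n k u \<le> RBr n k v" for u
  proof -
    have uv: "u < n+k+5" "v < n+k+5" using u assms unfolding GV_def by auto
    show False using cls[OF uv(1)] cls[OF uv(2)] u assms unfolding LBr_def RBr_def
      by (elim disjE) (simp_all; presburger)+
  qed
  then show ?thesis by blast
qed

lemma G_hub:
  assumes k: "1 \<le> k" and W: "W \<subseteq> GV n k" "0 \<in> W" "n+k+4 \<in> W"
    and EE: "\<forall>u\<in>W. \<forall>v\<in>W. E' u v = GE n k u v" and rep: "interval_rep W E' l r"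
  shows "card W \<le> cnt W l r 0 + 4"
proof (rule hub2_lb[OF rep _ W(2) _ W(3)])
  show "finite W" using W(1) unfolding GV_def using finite_subset by blast
  show "\<forall>u\<in>W - {0}. E' 0 u" using EE W unfolding GE_def GV_def by auto
  show "n + k + 4 \<noteq> 0" by simp
  show "\<forall>u\<in>W. u \<noteq> 0 \<longrightarrow> \<not> E' u (n + k + 4)" using EE W k unfolding GE_def GV_def by auto
  have edge: "(u = 1 \<and> 3 \<le> v \<and> v \<le> n+4) \<or> (v = 1 \<and> 3 \<le> u \<and> u \<le> n+4) \<or> (u = 2 \<and> v = 3) \<or> (u = 3 \<and> v = 2)"
    if "u \<in> W - {0}" "v \<in> W - {0}" "E' u v" for u v
  proof -
    have "GE n k u v" using that EE by auto
    then show ?thesis using that unfolding GE_def by auto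
  qed
  have e13: "E' 1 3" if "1 \<in> W" "3 \<in> W" using EE that unfolding GE_def GV_def by auto
  show False if "u \<in> W - {0}" "v \<in> W - {0}" "w \<in> W - {0}" "u \<noteq> v" "v \<noteq> w" "u \<noteq> w" "E' u v" "E' v w" "E' u w" for u v w
  proof -
    have a: "(u = 1 \<and> 3 \<le> v \<and> v \<le> n+4) \<or> (v = 1 \<and> 3 \<le> u \<and> u \<le> n+4) \<or> (u = 2 \<and> v = 3) \<or> (u = 3 \<and> v = 2)"
      using edge that by blast
    have b: "(v = 1 \<and> 3 \<le> w \<and> w \<le> n+4) \<or> (w = 1 \<and> 3 \<le> v \<and> v \<le> n+4) \<or> (v = 2 \<and> w = 3) \<or> (v = 3 \<and> w = 2)"
      using edge that by blast
    have c: "(u = 1 \<and> 3 \<le> w \<and> w \<le> n+4) \<or> (w = 1 \<and> 3 \<le> u \<and> u \<le> n+4) \<or> (u = 2 \<and> w = 3) \<or> (u = 3 \<and> w = 2)"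
      using edge that by blast
    show False using a b c that(4-6) by linarith
  qed
  show "E' u1 w1 \<or> E' u1 w2 \<or> E' u2 w1 \<or> E' u2 w2"
    if "u1 \<in> W - {0}" "u2 \<in> W - {0}" "w1 \<in> W - {0}" "w2 \<in> W - {0}" "distinct [u1, u2, w1, w2]" "E' u1 u2" "E' w1 w2"
    for u1 u2 w1 w2
  proof -
    have a: "(u1 = 1 \<and> 3 \<le> u2 \<and> u2 \<le> n+4) \<or> (u2 = 1 \<and> 3 \<le> u1 \<and> u1 \<le> n+4) \<or> (u1 = 2 \<and> u2 = 3) \<or> (u1 = 3 \<and> u2 = 2)"
      using edge that by blast
    have b: "(w1 = 1 \<and> 3 \<le> w2 \<and> w2 \<le> n+4) \<or> (w2 = 1 \<and> 3 \<le> w1 \<and> w1 \<le> n+4) \<or> (w1 = 2 \<and> w2 = 3) \<or> (w1 = 3 \<and> w2 = 2)"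
      using edge that by blast
    have d: "distinct [u1, u2, w1, w2]" by fact
    have "1 \<in> W" "3 \<in> W" if "(u1 = 1 \<or> u2 = 1 \<or> w1 = 1 \<or> w2 = 1) \<and> (u1 = 3 \<or> u2 = 3 \<or> w1 = 3 \<or> w2 = 3)"
      using that \<open>u1 \<in> W - {0}\<close> \<open>u2 \<in> W - {0}\<close> \<open>w1 \<in> W - {0}\<close> \<open>w2 \<in> W - {0}\<close> by auto
    then have e: "E' 1 3" "E' 3 1" if "(u1 = 1 \<or> u2 = 1 \<or> w1 = 1 \<or> w2 = 1) \<and> (u1 = 3 \<or> u2 = 3 \<or> w1 = 3 \<or> w2 = 3)"
      using e13 that EE unfolding GE_def by auto
    from a b d show ?thesis
    proof (elim disjE conjE)
    qed (use e in auto)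
  qed
qed

lemma repS_full:
  assumes "1 \<le> k" "8*n+36 \<le> DR" "DR \<le> 8*n+43" "8*n+8*k+36 \<le> CR"
  shows "\<forall>u\<in>GV n k. \<forall>v\<in>GV n k. u \<noteq> v \<longrightarrow>
     (GE n k u v \<longleftrightarrow> LS n k u \<le> RS n k CR DR v \<and> LS n k v \<le> RS n k CR DR u)"
proof (intro ballI impI)
  fix u v assume uv: "u \<in> GV n k" "v \<in> GV n k" "u \<noteq> v"
  show "GE n k u v \<longleftrightarrow> LS n k u \<le> RS n k CR DR v \<and> LS n k v \<le> RS n k CR DR u"
  proof (cases "(u = 0 \<and> v = n+k+4) \<or> (v = 0 \<and> u = n+k+4)")
    case True
    then show ?thesis using assms unfolding GE_def LS_def RS_def by auto
  next
    case False
    then show ?thesis using repS_adj[OF assms(1-3), of CR u v] assms uv unfolding GV_def by auto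
  qed
qed

lemma repS_sub:
  assumes "1 \<le> k" "8*n+36 \<le> DR" "DR \<le> 8*n+43" "8*n+8*k+28 \<le> CR" "w = 0 \<or> w = n+k+4"
  shows "\<forall>u\<in>GV n k - {w}. \<forall>v\<in>GV n k - {w}. u \<noteq> v \<longrightarrow>
     (GE n k u v \<longleftrightarrow> LS n k u \<le> RS n k CR DR v \<and> LS n k v \<le> RS n k CR DR u)"
  using repS_adj[OF assms(1-4)] assms(5) unfolding GV_def by auto

lemma repB_full:
  assumes "1 \<le> k"
  shows "\<forall>u\<in>GV n k. \<forall>v\<in>GV n k. u \<noteq> v \<longrightarrow>
     (GE n k u v \<longleftrightarrow> LBr n k u \<le> RBr n k v \<and> LBr n k v \<le> RBr n k u)"
  using repB_adj[OF assms] unfolding GV_def by auto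

lemma card_ins14: "3 \<le> M \<Longrightarrow> card (insert (1::nat) {4..M}) = M - 2"
proof -
  assume "3 \<le> M"
  have "(1::nat) \<notin> {4..M}" by simp
  then show ?thesis using \<open>3 \<le> M\<close> by simp
qed

lemma card_sub_le:
  assumes "{u\<in>V. u \<noteq> v \<and> P u} \<subseteq> S" "finite S"
  shows "card {u\<in>V - {w}. u \<noteq> v \<and> P u} \<le> card (S - {w})"
  using assms by (intro card_mono) auto

lemma card_sub_le0:
  assumes "{u\<in>V. u \<noteq> v \<and> P u} \<subseteq> S" "finite S"
  shows "card {u\<in>V. u \<noteq> v \<and> P u} \<le> card S"
  using assms by (intro card_mono) auto

lemma card_sub_empty:
  assumes "{u\<in>V. u \<noteq> v \<and> P u} = {}"
  shows "card {u\<in>V - {w}. u \<noteq> v \<and> P u} = 0"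
proof -
  have "{u\<in>V - {w}. u \<noteq> v \<and> P u} = {}" using assms by auto
  then show ?thesis by (metis card.empty)
qed

lemma G_improper:
  assumes k: "1 \<le> k"
  shows "improper (n+k+1) (GV n k) (GE n k)"
proof (rule improper_nat[OF simple_G, where L="LS n k" and R="RS n k (8*n+8*k+38) (8*n+38)"])
  show "\<forall>u\<in>GV n k. LS n k u \<le> RS n k (8*n+8*k+38) (8*n+38) u" using LS_RS by auto
  show "\<forall>u\<in>GV n k. \<forall>v\<in>GV n k. u \<noteq> v \<longrightarrow> (GE n k u v \<longleftrightarrow> LS n k u \<le> RS n k (8*n+8*k+38) (8*n+38) v \<and> LS n k v \<le> RS n k (8*n+8*k+38) (8*n+38) u)"
    by (rule repS_full) (use k in auto)
  show "\<forall>v\<in>GV n k. card {u\<in>GV n k. u \<noteq> v \<and> LS n k v \<le> LS n k u \<and> RS n k (8*n+8*k+38) (8*n+38) u \<le> RS n k (8*n+8*k+38) (8*n+38) v} \<le> n+k+1"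
  proof
    fix v assume v: "v \<in> GV n k"
    consider "v = 0" | "v = 1" | "v \<noteq> 0" "v \<noteq> 1" by blast
    then show "card {u\<in>GV n k. u \<noteq> v \<and> LS n k v \<le> LS n k u \<and> RS n k (8*n+8*k+38) (8*n+38) u \<le> RS n k (8*n+8*k+38) (8*n+38) v} \<le> n+k+1"
    proof cases
      case 1
      have "card {u\<in>GV n k. u \<noteq> v \<and> LS n k v \<le> LS n k u \<and> RS n k (8*n+8*k+38) (8*n+38) u \<le> RS n k (8*n+8*k+38) (8*n+38) v}
          \<le> card (insert 1 {4..n+k+3})"
        unfolding 1 by (rule card_sub_le0[OF cS0]) (use k in auto)
      then show ?thesis using card_ins14[of "n+k+3"] by simp
    next
      case 2
      have "card {u\<in>GV n k. u \<noteq> v \<and> LS n k v \<le> LS n k u \<and> RS n k (8*n+8*k+38) (8*n+38) u \<le> RS n k (8*n+8*k+38) (8*n+38) v}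
          \<le> card {4..n+4}"
        unfolding 2 by (rule card_sub_le0[OF cS1]) (use k in auto)
      then show ?thesis by simp
    next
      case 3
      have "{u\<in>GV n k. u \<noteq> v \<and> LS n k v \<le> LS n k u \<and> RS n k (8*n+8*k+38) (8*n+38) u \<le> RS n k (8*n+8*k+38) (8*n+38) v} = {}"
        by (rule cSo) (use k v 3 in auto)
      then show ?thesis by (metis card.empty zero_le)
    qed
  qed
qed

lemma fst_del: "fst (del_vertex V E w) = V - {w}" unfolding del_vertex_def by simp
lemma snd_del: "snd (del_vertex V E w) u v = (E u v \<and> u \<noteq> w \<and> v \<noteq> w)" unfolding del_vertex_def by simp

lemma G_del0:
  assumes k: "1 \<le> k"
  shows "improper n (fst (del_vertex (GV n k) (GE n k) 0)) (snd (del_vertex (GV n k) (GE n k) 0))"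
proof (rule improper_del_nat[OF simple_G, where L="LS n k" and R="RS n k (8*n+8*k+38) (8*n+37)"])
  show "\<forall>u\<in>GV n k - {0}. LS n k u \<le> RS n k (8*n+8*k+38) (8*n+37) u" using LS_RS by auto
  show "\<forall>u\<in>GV n k - {0}. \<forall>v\<in>GV n k - {0}. u \<noteq> v \<longrightarrow> (GE n k u v \<longleftrightarrow> LS n k u \<le> RS n k (8*n+8*k+38) (8*n+37) v \<and> LS n k v \<le> RS n k (8*n+8*k+38) (8*n+37) u)"
    by (rule repS_sub) (use k in auto)
  show "\<forall>v\<in>GV n k - {0}. card {u\<in>GV n k - {0}. u \<noteq> v \<and> LS n k v \<le> LS n k u \<and> RS n k (8*n+8*k+38) (8*n+37) u \<le> RS n k (8*n+8*k+38) (8*n+37) v} \<le> n"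
  proof
    fix v assume v: "v \<in> GV n k - {0}"
    show "card {u\<in>GV n k - {0}. u \<noteq> v \<and> LS n k v \<le> LS n k u \<and> RS n k (8*n+8*k+38) (8*n+37) u \<le> RS n k (8*n+8*k+38) (8*n+37) v} \<le> n"
    proof (cases "v = 1")
      case True
      have "card {u\<in>GV n k - {0}. u \<noteq> v \<and> LS n k v \<le> LS n k u \<and> RS n k (8*n+8*k+38) (8*n+37) u \<le> RS n k (8*n+8*k+38) (8*n+37) v}
          \<le> card ({4..n+3} - {0})"
        unfolding True by (rule card_sub_le[OF cS1]) (use k in auto)
      then show ?thesis by simp
    next
      case False
      have e: "{u\<in>GV n k. u \<noteq> v \<and> LS n k v \<le> LS n k u \<and> RS n k (8*n+8*k+38) (8*n+37) u \<le> RS n k (8*n+8*k+38) (8*n+37) v} = {}"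
        by (rule cSo) (use k v False in auto)
      show ?thesis using card_sub_empty[OF e, of 0] by simp
    qed
  qed
qed

lemma card_Un3: "card ({2,3} \<union> {5..M::nat}) \<le> 2 + (Suc M - 5)"
proof -
  have "card ({2,3} \<union> {5..M::nat}) \<le> card {2,3::nat} + card {5..M}" by (rule card_Un_le)
  then show ?thesis by simp
qed

lemma G_crit:
  assumes k: "1 \<le> k" and w: "w \<in> GV n k"
  shows "improper (n+k) (fst (del_vertex (GV n k) (GE n k) w)) (snd (del_vertex (GV n k) (GE n k) w))"
proof -
  have wl: "w < n+k+5" using w by (simp add: GV_def)
  consider "w = 0" | "w = n+k+4" | "w = 2 \<or> w = 3" | "w = 1 \<or> (4 \<le> w \<and> w \<le> n+k+3)"
    using wl by linarith
  then show ?thesis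
  proof cases
    case 1
    then show ?thesis using G_del0[OF k, of n] improper_mono by fastforce
  next
    case 2
    let ?R = "RS n k (8*n+8*k+29) (8*n+38)"
    show ?thesis
    proof (rule improper_del_nat[OF simple_G, where L="LS n k" and R="?R"])
      show "\<forall>u\<in>GV n k - {w}. LS n k u \<le> ?R u" using LS_RS k by auto
      show "\<forall>u\<in>GV n k - {w}. \<forall>v\<in>GV n k - {w}. u \<noteq> v \<longrightarrow> (GE n k u v \<longleftrightarrow> LS n k u \<le> ?R v \<and> LS n k v \<le> ?R u)"
        by (rule repS_sub) (use k 2 in auto)
      show "\<forall>v\<in>GV n k - {w}. card {u\<in>GV n k - {w}. u \<noteq> v \<and> LS n k v \<le> LS n k u \<and> ?R u \<le> ?R v} \<le> n+k"
      proof
        fix v assume v: "v \<in> GV n k - {w}"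
        consider "v = 0" | "v = 1" | "v \<noteq> 0" "v \<noteq> 1" by blast
        then show "card {u\<in>GV n k - {w}. u \<noteq> v \<and> LS n k v \<le> LS n k u \<and> ?R u \<le> ?R v} \<le> n+k"
        proof cases
          case 1
          have "card {u\<in>GV n k - {w}. u \<noteq> v \<and> LS n k v \<le> LS n k u \<and> ?R u \<le> ?R v} \<le> card (insert 1 {4..n+k+2} - {w})"
            unfolding 1 by (rule card_sub_le[OF cS0]) (use k in auto)
          also have "\<dots> \<le> card (insert 1 {4..n+k+2})" by (rule card_Diff1_le)
          finally show ?thesis using card_ins14[of "n+k+2"] k by simp
        next
          case 2
          have "card {u\<in>GV n k - {w}. u \<noteq> v \<and> LS n k v \<le> LS n k u \<and> ?R u \<le> ?R v} \<le> card ({4..n+4} - {w})"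
            unfolding 2 by (rule card_sub_le[OF cS1]) (use k in auto)
          also have "\<dots> \<le> card {4..n+4}" by (rule card_Diff1_le)
          finally show ?thesis using k by simp
        next
          case 3
          have e: "{u\<in>GV n k. u \<noteq> v \<and> LS n k v \<le> LS n k u \<and> ?R u \<le> ?R v} = {}"
            by (rule cSo) (use k v 3 in auto)
          show ?thesis using card_sub_empty[OF e, of w] by simp
        qed
      qed
    qed
  next
    case 3
    let ?L = "LBr n k" and ?R = "RBr n k"
    show ?thesis
    proof (rule improper_del_nat[OF simple_G, where L="?L" and R="?R"])
      show "\<forall>u\<in>GV n k - {w}. ?L u \<le> ?R u" using LB_RB by auto
      show "\<forall>u\<in>GV n k - {w}. \<forall>v\<in>GV n k - {w}. u \<noteq> v \<longrightarrow> (GE n k u v \<longleftrightarrow> ?L u \<le> ?R v \<and> ?L v \<le> ?R u)"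
        using repB_full[OF k] by auto
      show "\<forall>v\<in>GV n k - {w}. card {u\<in>GV n k - {w}. u \<noteq> v \<and> ?L v \<le> ?L u \<and> ?R u \<le> ?R v} \<le> n+k"
      proof
        fix v assume v: "v \<in> GV n k - {w}"
        consider "v = 0" | "v = 1" | "v \<noteq> 0" "v \<noteq> 1" by blast
        then show "card {u\<in>GV n k - {w}. u \<noteq> v \<and> ?L v \<le> ?L u \<and> ?R u \<le> ?R v} \<le> n+k"
        proof cases
          case 1
          have "card {u\<in>GV n k - {w}. u \<noteq> v \<and> ?L v \<le> ?L u \<and> ?R u \<le> ?R v} \<le> card (({2,3} \<union> {5..n+k+3}) - {w})"
            unfolding 1 by (rule card_sub_le[OF cB0[OF k]]) simp
          also have "\<dots> = card ({2,3} \<union> {5..n+k+3}) - 1" using 3 by (intro card_Diff_singleton) auto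
          finally show ?thesis using card_Un3[of "n+k+3"] k by linarith
        next
          case 2
          have "card {u\<in>GV n k - {w}. u \<noteq> v \<and> ?L v \<le> ?L u \<and> ?R u \<le> ?R v} \<le> card ({5..n+4} - {w})"
            unfolding 2 by (rule card_sub_le[OF cB1[OF k]]) simp
          also have "\<dots> \<le> card {5..n+4}" by (rule card_Diff1_le)
          finally show ?thesis using k by simp
        next
          case 3
          have e: "{u\<in>GV n k. u \<noteq> v \<and> ?L v \<le> ?L u \<and> ?R u \<le> ?R v} = {}"
            by (rule cBo) (use k v 3 in auto)
          show ?thesis using card_sub_empty[OF e, of w] by simp
        qed
      qed
    qed
  next
    case 4
    let ?R = "RS n k (8*n+8*k+38) (8*n+38)"
    show ?thesis
    proof (rule improper_del_nat[OF simple_G, where L="LS n k" and R="?R"])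
      show "\<forall>u\<in>GV n k - {w}. LS n k u \<le> ?R u" using LS_RS k by auto
      have "\<forall>u\<in>GV n k. \<forall>v\<in>GV n k. u \<noteq> v \<longrightarrow> (GE n k u v \<longleftrightarrow> LS n k u \<le> ?R v \<and> LS n k v \<le> ?R u)"
        by (rule repS_full) (use k in auto)
      then show "\<forall>u\<in>GV n k - {w}. \<forall>v\<in>GV n k - {w}. u \<noteq> v \<longrightarrow> (GE n k u v \<longleftrightarrow> LS n k u \<le> ?R v \<and> LS n k v \<le> ?R u)"
        by auto
      show "\<forall>v\<in>GV n k - {w}. card {u\<in>GV n k - {w}. u \<noteq> v \<and> LS n k v \<le> LS n k u \<and> ?R u \<le> ?R v} \<le> n+k"
      proof
        fix v assume v: "v \<in> GV n k - {w}"
        consider "v = 0" | "v = 1" | "v \<noteq> 0" "v \<noteq> 1" by blast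
        then show "card {u\<in>GV n k - {w}. u \<noteq> v \<and> LS n k v \<le> LS n k u \<and> ?R u \<le> ?R v} \<le> n+k"
        proof cases
          case 1
          have "card {u\<in>GV n k - {w}. u \<noteq> v \<and> LS n k v \<le> LS n k u \<and> ?R u \<le> ?R v} \<le> card (insert 1 {4..n+k+3} - {w})"
            unfolding 1 by (rule card_sub_le[OF cS0]) (use k in auto)
          also have "\<dots> = card (insert 1 {4..n+k+3}) - 1" using 4 by (intro card_Diff_singleton) auto
          finally show ?thesis using card_ins14[of "n+k+3"] by simp
        next
          case 2
          have "card {u\<in>GV n k - {w}. u \<noteq> v \<and> LS n k v \<le> LS n k u \<and> ?R u \<le> ?R v} \<le> card ({4..n+4} - {w})"
            unfolding 2 by (rule card_sub_le[OF cS1]) (use k in auto)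
          also have "\<dots> \<le> card {4..n+4}" by (rule card_Diff1_le)
          finally show ?thesis using k by simp
        next
          case 3
          have e: "{u\<in>GV n k. u \<noteq> v \<and> LS n k v \<le> LS n k u \<and> ?R u \<le> ?R v} = {}"
            by (rule cSo) (use k v 3 in auto)
          show ?thesis using card_sub_empty[OF e, of w] by simp
        qed
      qed
    qed
  qed
qed

lemma G_lb:
  assumes k: "1 \<le> k"
  shows "\<not> improper (n+k) (GV n k) (GE n k)"
proof
  assume "improper (n+k) (GV n k) (GE n k)"
  then obtain l r where rep: "interval_rep (GV n k) (GE n k) l r" and c: "\<forall>v\<in>GV n k. cnt (GV n k) l r v \<le> n+k"
    unfolding improper_alt by blast
  have "card (GV n k) \<le> cnt (GV n k) l r 0 + 4"
    by (rule G_hub[OF k _ _ _ _ rep]) (auto simp: GV_def)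
  moreover have "cnt (GV n k) l r 0 \<le> n+k" using c by (auto simp: GV_def)
  moreover have "card (GV n k) = n+k+5" by (simp add: GV_def)
  ultimately show False by linarith
qed

lemma G_lb4:
  assumes k: "1 \<le> k"
  shows "\<not> improper (n+k-1) (fst (del_vertex (GV n k) (GE n k) 4)) (snd (del_vertex (GV n k) (GE n k) 4))"
proof
  assume "improper (n+k-1) (fst (del_vertex (GV n k) (GE n k) 4)) (snd (del_vertex (GV n k) (GE n k) 4))"
  then obtain l r where rep: "interval_rep (GV n k - {4}) (snd (del_vertex (GV n k) (GE n k) 4)) l r"
     and c: "\<forall>v\<in>GV n k - {4}. cnt (GV n k - {4}) l r v \<le> n+k-1"
    unfolding improper_alt fst_del by blast
  have "card (GV n k - {4}) \<le> cnt (GV n k - {4}) l r 0 + 4"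
    by (rule G_hub[OF k _ _ _ _ rep]) (use k in \<open>auto simp: GV_def snd_del\<close>)
  moreover have "cnt (GV n k - {4}) l r 0 \<le> n+k-1" using c by (auto simp: GV_def)
  moreover have "card (GV n k - {4}) = n+k+4" using k by (simp add: GV_def)
  ultimately show False using k by linarith
qed

lemma G_lbc:
  assumes k: "1 \<le> k" and n: "1 \<le> n"
  shows "\<not> improper (n-1) (fst (del_vertex (GV n k) (GE n k) 0)) (snd (del_vertex (GV n k) (GE n k) 0))"
proof
  assume "improper (n-1) (fst (del_vertex (GV n k) (GE n k) 0)) (snd (del_vertex (GV n k) (GE n k) 0))"
  then obtain l r where rep: "interval_rep (GV n k - {0}) (snd (del_vertex (GV n k) (GE n k) 0)) l r"
     and c: "\<forall>v\<in>GV n k - {0}. cnt (GV n k - {0}) l r v \<le> n-1"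
    unfolding improper_alt fst_del by blast
  have "card {3..n+4} \<le> cnt (GV n k - {0}) l r 1 + 2"
    by (rule star_lb[OF rep]) (auto simp: GV_def snd_del GE_def)
  moreover have "cnt (GV n k - {0}) l r 1 \<le> n-1" using c by (auto simp: GV_def)
  ultimately show False using n by simp
qed

definition KV :: "nat set" where "KV = {0,1,2,3}"
definition KE :: "nat \<Rightarrow> nat \<Rightarrow> bool" where "KE u v \<longleftrightarrow> u \<in> KV \<and> v \<in> KV \<and> u \<noteq> v \<and> (u = 0 \<or> v = 0)"

lemma simple_K: "simple_graph KV KE" unfolding simple_graph_def KV_def KE_def by auto

lemma K_cnt1:
  fixes L R :: "nat \<Rightarrow> nat"
  assumes "\<forall>v\<in>KV. \<forall>u\<in>KV. u \<noteq> v \<and> L v \<le> L u \<and> R u \<le> R v \<longrightarrow> u = j"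
  shows "\<forall>v\<in>KV. card {u\<in>KV. u \<noteq> v \<and> L v \<le> L u \<and> R u \<le> R v} \<le> 1"
proof
  fix v assume v: "v \<in> KV"
  have "{u\<in>KV. u \<noteq> v \<and> L v \<le> L u \<and> R u \<le> R v} \<subseteq> {j}" using assms v by auto
  then have "card {u\<in>KV. u \<noteq> v \<and> L v \<le> L u \<and> R u \<le> R v} \<le> card {j}" by (intro card_mono) auto
  then show "card {u\<in>KV. u \<noteq> v \<and> L v \<le> L u \<and> R u \<le> R v} \<le> 1" by simp
qed

lemma K_cnt0:
  fixes L R :: "nat \<Rightarrow> nat"
  assumes "\<forall>v\<in>KV. \<forall>u\<in>KV. u \<noteq> v \<and> L v \<le> L u \<and> R u \<le> R v \<longrightarrow> v = 0 \<and> u = j" "w = 0 \<or> w = j"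
  shows "\<forall>v\<in>KV-{w}. card {u\<in>KV-{w}. u \<noteq> v \<and> L v \<le> L u \<and> R u \<le> R v} \<le> 0"
proof
  fix v assume v: "v \<in> KV-{w}"
  have "{u\<in>KV-{w}. u \<noteq> v \<and> L v \<le> L u \<and> R u \<le> R v} = {}" using assms v by auto
  then show "card {u\<in>KV-{w}. u \<noteq> v \<and> L v \<le> L u \<and> R u \<le> R v} \<le> 0" by (metis card.empty order_refl)
qed

lemma K_imp1: "improper 1 KV KE"
proof (rule improper_nat[OF simple_K, where L="\<lambda>u. [2,0,4,6::nat] ! u" and R="\<lambda>u. [6,2,4,8::nat] ! u"])
  show "\<forall>u\<in>KV. [2,0,4,6::nat] ! u \<le> [6,2,4,8::nat] ! u" by (simp add: KV_def)
  show "\<forall>u\<in>KV. \<forall>v\<in>KV. u \<noteq> v \<longrightarrow> (KE u v \<longleftrightarrow> [2,0,4,6::nat] ! u \<le> [6,2,4,8::nat] ! v \<and> [2,0,4,6::nat] ! v \<le> [6,2,4,8::nat] ! u)"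
    by (simp add: KV_def KE_def)
  show "\<forall>v\<in>KV. card {u\<in>KV. u \<noteq> v \<and> [2,0,4,6::nat] ! v \<le> [2,0,4,6::nat] ! u \<and> [6,2,4,8::nat] ! u \<le> [6,2,4,8::nat] ! v} \<le> 1"
    by (rule K_cnt1[where j=2]) (simp add: KV_def)
qed

lemma K_delj:
  fixes L R :: "nat \<Rightarrow> nat"
  assumes "\<forall>u\<in>KV. L u \<le> R u" "\<forall>u\<in>KV. \<forall>v\<in>KV. u \<noteq> v \<longrightarrow> (KE u v \<longleftrightarrow> L u \<le> R v \<and> L v \<le> R u)"
    "\<forall>v\<in>KV. \<forall>u\<in>KV. u \<noteq> v \<and> L v \<le> L u \<and> R u \<le> R v \<longrightarrow> v = 0 \<and> u = j" "w = 0 \<or> w = j"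
  shows "improper 0 (fst (del_vertex KV KE w)) (snd (del_vertex KV KE w))"
  by (rule improper_del_nat[OF simple_K, where L=L and R=R]) (use assms K_cnt0[OF assms(3,4)] in auto)

lemma K_del:
  assumes "w \<in> KV" shows "improper 0 (fst (del_vertex KV KE w)) (snd (del_vertex KV KE w))"
proof -
  consider "w = 0 \<or> w = 2" | "w = 1" | "w = 3" using assms by (auto simp: KV_def)
  then show ?thesis
  proof cases
    case 1 note w = this show ?thesis
      by (rule K_delj[where L="\<lambda>u. [2,0,4,6::nat] ! u" and R="\<lambda>u. [6,2,4,8::nat] ! u" and j=2]) (use w in \<open>simp_all add: KV_def KE_def\<close>)
  next
    case 2 note w = this show ?thesis
      by (rule K_delj[where L="\<lambda>u. [2,4,0,6::nat] ! u" and R="\<lambda>u. [6,4,2,8::nat] ! u" and j=1]) (use w in \<open>simp_all add: KV_def KE_def\<close>)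
  next
    case 3 note w = this show ?thesis
      by (rule K_delj[where L="\<lambda>u. [2,0,6,4::nat] ! u" and R="\<lambda>u. [6,2,8,4::nat] ! u" and j=3]) (use w in \<open>simp_all add: KV_def KE_def\<close>)
  qed
qed

lemma K_lb: "\<not> improper 0 KV KE"
proof
  assume "improper 0 KV KE"
  then obtain l r where rep: "interval_rep KV KE l r" and c: "\<forall>v\<in>KV. cnt KV l r v \<le> 0"
    unfolding improper_alt by blast
  have "card {1,2,3::nat} \<le> cnt KV l r 0 + 2"
    by (rule star_lb[OF rep]) (auto simp: KV_def KE_def)
  moreover have "cnt KV l r 0 \<le> 0" using c by (auto simp: KV_def)
  ultimately show False by simp
qed

theorem theorem1:
  fixes p :: nat
  assumes "p \<ge> 1"
  shows "spec_imp p = {0..<p}"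
proof (rule set_eqI, rule iffI)
  fix m assume "m \<in> spec_imp p"
  then obtain V :: "nat set" and E v where cr: "critical_improper p V E" and v: "v \<in> V"
    and ex: "exactly_improper m (fst (del_vertex V E v)) (snd (del_vertex V E v))"
    unfolding spec_imp_def by blast
  have ip: "improper (p-1) (fst (del_vertex V E v)) (snd (del_vertex V E v))"
    using cr v unfolding critical_improper_def by blast
  show "m \<in> {0..<p}"
  proof (rule ccontr)
    assume "m \<notin> {0..<p}"
    then have "p \<le> m" by simp
    then have "m \<noteq> 0" "\<not> improper (m-1) (fst (del_vertex V E v)) (snd (del_vertex V E v))"
      using ex assms unfolding exactly_improper_def by auto
    moreover have "improper (m-1) (fst (del_vertex V E v)) (snd (del_vertex V E v))"
      using improper_mono[OF ip] \<open>p \<le> m\<close> by simp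
    ultimately show False by blast
  qed
next
  fix m assume "m \<in> {0..<p}"
  then have m: "m < p" by simp
  show "m \<in> spec_imp p"
  proof (cases "p = 1")
    case True
    then have m0: "m = 0" using m by simp
    have "critical_improper p KV KE" unfolding critical_improper_def True
      using K_imp1 K_del by simp
    moreover have "exactly_improper p KV KE" unfolding exactly_improper_def True using K_imp1 K_lb by simp
    moreover have "exactly_improper m (fst (del_vertex KV KE 0)) (snd (del_vertex KV KE 0))"
      unfolding exactly_improper_def m0 using K_del[of 0] by (simp add: KV_def)
    moreover have "(0::nat) \<in> KV" by (simp add: KV_def)
    ultimately show ?thesis unfolding spec_imp_def by blast
  next
    case False
    then have p2: "2 \<le> p" using assms by simp
    show ?thesis
    proof (cases "m \<le> p - 2")
      case True
      define k where "k = p - 1 - m"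
      have k: "1 \<le> k" using True p2 unfolding k_def by simp
      have hk: "m + k + 1 = p" "m + k = p - 1" using True p2 unfolding k_def by simp_all
      have "critical_improper p (GV m k) (GE m k)"
        unfolding critical_improper_def using G_improper[OF k, of m] G_crit[OF k, of _ m] hk assms by simp
      moreover have "exactly_improper p (GV m k) (GE m k)"
        unfolding exactly_improper_def using G_improper[OF k, of m] G_lb[OF k, of m] hk by simp
      moreover have "exactly_improper m (fst (del_vertex (GV m k) (GE m k) 0)) (snd (del_vertex (GV m k) (GE m k) 0))"
        unfolding exactly_improper_def using G_del0[OF k, of m] G_lbc[OF k, of m] by (cases "m = 0") simp_all
      moreover have "(0::nat) \<in> GV m k" by (simp add: GV_def)
      ultimately show ?thesis unfolding spec_imp_def by blast
    next
      case False
      then have mp: "m = p - 1" using m by simp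
      define k where "k = p - 1"
      have k: "1 \<le> k" using p2 unfolding k_def by simp
      have hk: "0 + k + 1 = p" "0 + k = p - 1" "0 + k - 1 = m - 1" using p2 mp unfolding k_def by simp_all
      have "critical_improper p (GV 0 k) (GE 0 k)"
        unfolding critical_improper_def using G_improper[OF k, of 0] G_crit[OF k, of _ 0] hk assms by simp
      moreover have "exactly_improper p (GV 0 k) (GE 0 k)"
        unfolding exactly_improper_def using G_improper[OF k, of 0] G_lb[OF k, of 0] hk by simp
      moreover have "exactly_improper m (fst (del_vertex (GV 0 k) (GE 0 k) 4)) (snd (del_vertex (GV 0 k) (GE 0 k) 4))"
      proof -
        have "(4::nat) \<in> GV 0 k" using k by (simp add: GV_def)
        then have "improper m (fst (del_vertex (GV 0 k) (GE 0 k) 4)) (snd (del_vertex (GV 0 k) (GE 0 k) 4))"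
          using G_crit[OF k, of 4 0] hk mp by simp
        moreover have "\<not> improper (m-1) (fst (del_vertex (GV 0 k) (GE 0 k) 4)) (snd (del_vertex (GV 0 k) (GE 0 k) 4))"
          using G_lb4[OF k, of 0] hk by simp
        ultimately show ?thesis unfolding exactly_improper_def by simp
      qed
      moreover have "(4::nat) \<in> GV 0 k" using k by (simp add: GV_def)
      ultimately show ?thesis unfolding spec_imp_def by blast
    qed
  qed
qed

end
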